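(* Let $m,d\ge1$, $\kappa\in(0,1]$, $\delta\in(0,0.1)$ and $D:=\sqrt{\log(md/\delta)}$. Let $W(0)\in\mathbb{R}^{d\times m}$ have i.i.d. $\mathcal N(0,I_d)$ columns and $a\in\{\pm1\}^m$ have i.i.d. uniform entries (independent), and set $W'(0):=W(0)$. Let $x\in\mathbb{R}^d$ with $\|x\|_2=1$ and let $\epsilon_{\rm init}>0$. If $\kappa\le O\big(\epsilon_{\rm init}/(\sqrt d\,D^2)\big)$, then with probability at least $1-\delta$, $|f(x,W(0),a)-f'(x,W'(0),a)|\le\epsilon_{\rm init}$.
   Context: $O(\cdot)$ hides absolute constants (sufficiently small). For $w\in\mathbb{R}^d$: $E(w):=\frac1d\sum_k w_k$, $V(w):=\frac1d\|w-E(w)\mathbf 1_d\|_2^2$, $\widetilde w:=\mathrm{Sign}\big((w-E(w)\mathbf 1_d)/\sqrt{V(w)}\big)\in\{\pm1\}^d$ with $\mathrm{Sign}_k(z)=+1$ if $z_k\ge0$, $-1$ otherwise; $\mathrm{dq}(\langle\widetilde w,x\rangle):=\sqrt{V(w)}\langle\widetilde w,x\rangle+E(w)\langle\mathbf 1_d,x\rangle$. The 1-bit network is $f(x,W,a):=\frac{\kappa}{\sqrt m}\sum_{r=1}^m a_r\mathrm{ReLU}(\mathrm{dq}(\langle\widetilde w_r,x\rangle))$ and the full-precision network is $f'(x,W,a):=\frac{\kappa}{\sqrt m}\sum_{r=1}^m a_r\mathrm{ReLU}(\langle w_r,x\rangle)$, where $W=[w_1,\dots,w_m]$ and $\mathrm{ReLU}(z)=\max\{z,0\}$.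 *)

theory Defs
  imports "HOL-Probability.Probability"
begin

(* Vectors in R^d are represented as functions nat => real, only the coordinates k < d matter. *)

definition vmean :: "nat \<Rightarrow> (nat \<Rightarrow> real) \<Rightarrow> real" where
  "vmean d w = (\<Sum>k<d. w k) / real d"

definition vvar :: "nat \<Rightarrow> (nat \<Rightarrow> real) \<Rightarrow> real" where
  "vvar d w = (\<Sum>k<d. (w k - vmean d w)\<^sup>2) / real d"

definition sgnvec :: "nat \<Rightarrow> (nat \<Rightarrow> real) \<Rightarrow> nat \<Rightarrow> real" where
  "sgnvec d w k = (if (w k - vmean d w) / sqrt (vvar d w) \<ge> 0 then 1 else -1)"

definition ip :: "nat \<Rightarrow> (nat \<Rightarrow> real) \<Rightarrow> (nat \<Rightarrow> real) \<Rightarrow> real" where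
  "ip d u v = (\<Sum>k<d. u k * v k)"

definition dq :: "nat \<Rightarrow> (nat \<Rightarrow> real) \<Rightarrow> (nat \<Rightarrow> real) \<Rightarrow> real" where
  "dq d w x = sqrt (vvar d w) * ip d (sgnvec d w) x + vmean d w * ip d (\<lambda>_. 1) x"

definition relu :: "real \<Rightarrow> real" where
  "relu z = max z 0"

(* W r = column w_r of W; a r = a_r *)
definition f_bin :: "real \<Rightarrow> nat \<Rightarrow> nat \<Rightarrow> (nat \<Rightarrow> real) \<Rightarrow> (nat \<Rightarrow> nat \<Rightarrow> real) \<Rightarrow> (nat \<Rightarrow> real) \<Rightarrow> real" where
  "f_bin \<kappa> m d x W a = \<kappa> / sqrt (real m) * (\<Sum>r<m. a r * relu (dq d (W r) x))"

definition f_full :: "real \<Rightarrow> nat \<Rightarrow> nat \<Rightarrow> (nat \<Rightarrow> real) \<Rightarrow> (nat \<Rightarrow> nat \<Rightarrow> real) \<Rightarrow> (nat \<Rightarrow> real) \<Rightarrow> real" where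
  "f_full \<kappa> m d x W a = \<kappa> / sqrt (real m) * (\<Sum>r<m. a r * relu (ip d (W r) x))"

(* Joint law of (W(0), a): entries W_{k r} i.i.d. N(0,1) (so the columns are i.i.d. N(0,I_d)),
   independent of a with i.i.d. uniform +-1 entries. *)
definition init_measure :: "nat \<Rightarrow> nat \<Rightarrow> (((nat \<times> nat) \<Rightarrow> real) \<times> (nat \<Rightarrow> real)) measure" where
  "init_measure m d =
     (PiM ({..<m} \<times> {..<d}) (\<lambda>_. std_normal_distribution))
     \<Otimes>\<^sub>M (PiM {..<m} (\<lambda>_. measure_pmf (pmf_of_set {-1, 1::real})))"

definition Wcols :: "((nat \<times> nat) \<Rightarrow> real) \<Rightarrow> nat \<Rightarrow> nat \<Rightarrow> real" where
  "Wcols w r k = w (r, k)"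

end

theory Submission imports Defs begin


lemma fact_ratio_le: "fact (2 * k) / (2^k * fact k) \<le> (2 * real k) ^ k"
proof (induction k)
  case 0 then show ?case by simp
next
  case (Suc k)
  have f1: "(fact (2 * Suc k) :: real) = (2 * real k + 2) * (2 * real k + 1) * fact (2*k)"
  proof -
    have "2 * Suc k = Suc (Suc (2*k))" by simp
    then have "(fact (2 * Suc k) :: real) = of_nat (Suc (Suc (2*k))) * (of_nat (Suc (2*k)) * fact (2*k))"
      by (simp only: fact_Suc)
    then show ?thesis by (simp add: algebra_simps)
  qed
  have f2: "(2::real)^Suc k * fact (Suc k) = 2 * (real k + 1) * (2^k * fact k)"
    by (simp add: fact_Suc)
  have e: "fact (2 * Suc k) / (2^Suc k * fact (Suc k)) = (fact (2 * k) / (2^k * fact k)) * (2 * real k + 1)"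
  proof -
    have P: "(2::real)^k * fact k > 0" by simp
    have K: "real k + 1 > 0" by simp
    have gen: "\<And>K P F k. K > 0 \<Longrightarrow> P > 0 \<Longrightarrow> (2*K)*(2*k+1)*F/(2*K*P) = F/P*(2*k+1::real)"
      by (simp add: field_simps)
    have "(2 * real k + 2) * (2 * real k + 1) * fact (2*k) / (2 * (real k + 1) * (2^k * fact k))
        = (2 * (real k + 1)) * (2 * real k + 1) * fact (2*k) / (2 * (real k + 1) * (2^k * fact k))"
      by (simp add: algebra_simps)
    also have "\<dots> = fact (2*k) / (2^k * fact k) * (2 * real k + 1)"
      by (rule gen[OF K P])
    finally show ?thesis unfolding f1 f2 .
  qed
  have "(2 * real k) ^ k \<le> (2 * real k + 2) ^ k" by (rule power_mono) auto
  then have "(fact (2 * k) / (2^k * fact k)) * (2 * real k + 1) \<le> (2 * real k + 2)^k * (2 * real k + 2)"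
    using Suc by (intro mult_mono) auto
  also have "\<dots> = (2 * real (Suc k)) ^ Suc k" by (simp add: algebra_simps)
  finally show ?case using e by simp
qed

lemma gauss_tail:
  assumes "T > 0"
  shows "measure std_normal_distribution {g. T \<le> \<bar>g\<bar>} \<le> (2 * real k / T\<^sup>2) ^ k"
proof (cases "k = 0")
  case True
  interpret prob_space std_normal_distribution by (simp add: prob_space_normal_density)
  have "measure std_normal_distribution {g. T \<le> \<bar>g\<bar>} \<le> 1" by (rule prob_le_1)
  then show ?thesis using True by simp
next
  case False
  have int: "integrable std_normal_distribution (\<lambda>x. x ^ (2*k))"
    by (subst integrable_density) (auto intro: integrable_std_normal_moment)
  have ie: "(\<integral>x. x ^ (2*k) \<partial>std_normal_distribution) = fact (2 * k) / (2^k * fact k)"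
    by (subst integral_density) (auto simp: integral_std_normal_moment_even)
  have "{g. T \<le> \<bar>g\<bar>} = {x \<in> space std_normal_distribution. T ^ (2*k) \<le> x ^ (2*k)}"
  proof -
    have "T \<le> \<bar>g\<bar> \<longleftrightarrow> T ^ (2*k) \<le> g ^ (2*k)" for g
    proof -
      have "g ^ (2*k) = \<bar>g\<bar> ^ (2*k)" by (simp add: power_even_abs)
      then show ?thesis using assms False
        by (simp add: power_mono_iff)
    qed
    then show ?thesis by auto
  qed
  also have "measure std_normal_distribution \<dots> \<le> (fact (2 * k) / (2^k * fact k)) / T ^ (2*k)"
    using integral_Markov_inequality_measure[OF int, of "space std_normal_distribution" "T^(2*k)"] assms ie
    by auto
  also have "\<dots> \<le> (2 * real k)^k / T ^ (2*k)"
    using assms fact_ratio_le[of k] by (intro divide_right_mono) auto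
  also have "\<dots> = (2 * real k / T\<^sup>2) ^ k" by (simp add: power_divide power_mult)
  finally show ?thesis .
qed




lemma gauss_union:
  fixes I :: "'i set"
  assumes fin: "finite I" and T: "T > 0"
  shows "measure (PiM I (\<lambda>_. std_normal_distribution))
           {w \<in> space (PiM I (\<lambda>_. std_normal_distribution)). \<exists>i\<in>I. T \<le> \<bar>w i\<bar>}
         \<le> real (card I) * (2 * real k / T\<^sup>2) ^ k"
proof -
  let ?N = "std_normal_distribution"
  let ?M = "PiM I (\<lambda>_. ?N)"
  have Np: "prob_space ?N" by (simp add: prob_space_normal_density)
  interpret P: prob_space ?M by (intro prob_space_PiM Np)
  have Sb: "{g::real. T \<le> \<bar>g\<bar>} \<in> sets ?N" by simp
  have S: "(\<lambda>w. w i) -` {g. T \<le> \<bar>g\<bar>} \<inter> space ?M \<in> sets ?M" if "i \<in> I" for i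
    by (rule measurable_sets[OF measurable_component_singleton[OF that] Sb])
  have eq: "{w \<in> space ?M. \<exists>i\<in>I. T \<le> \<bar>w i\<bar>} = (\<Union>i\<in>I. (\<lambda>w. w i) -` {g. T \<le> \<bar>g\<bar>} \<inter> space ?M)"
    by auto
  have "measure ?M {w \<in> space ?M. \<exists>i\<in>I. T \<le> \<bar>w i\<bar>}
      \<le> (\<Sum>i\<in>I. measure ?M ((\<lambda>w. w i) -` {g. T \<le> \<bar>g\<bar>} \<inter> space ?M))"
    unfolding eq using S by (intro P.finite_measure_subadditive_finite fin) auto
  also have "\<dots> = (\<Sum>i\<in>I. measure ?N {g. T \<le> \<bar>g\<bar>})"
  proof (intro sum.cong refl)
    fix i assume i: "i \<in> I"
    have "measure ?M ((\<lambda>w. w i) -` {g. T \<le> \<bar>g\<bar>} \<inter> space ?M) = measure (distr ?M ?N (\<lambda>w. w i)) {g. T \<le> \<bar>g\<bar>}"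
      by (rule measure_distr[OF measurable_component_singleton[OF i] Sb, symmetric])
    also have "distr ?M ?N (\<lambda>w. w i) = ?N"
      using i by (intro distr_PiM_component Np)
    finally show "measure ?M ((\<lambda>w. w i) -` {g. T \<le> \<bar>g\<bar>} \<inter> space ?M) = measure ?N {g. T \<le> \<bar>g\<bar>}" .
  qed
  also have "\<dots> \<le> (\<Sum>i\<in>I. (2 * real k / T\<^sup>2) ^ k)"
    by (intro sum_mono gauss_tail T)
  also have "\<dots> = real (card I) * (2 * real k / T\<^sup>2) ^ k" by simp
  finally show ?thesis .
qed




lemma relu_lip: "\<bar>relu a - relu b\<bar> \<le> \<bar>a - b\<bar>"
  unfolding relu_def by linarith

lemma sum_abs_le_sqrt:
  fixes x :: "nat \<Rightarrow> real"
  assumes "(\<Sum>k<d. (x k)\<^sup>2) = 1"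
  shows "(\<Sum>k<d. \<bar>x k\<bar>) \<le> sqrt (real d)"
proof -
  have "(\<Sum>k<d. 1 * \<bar>x k\<bar>)\<^sup>2 \<le> (\<Sum>k<d. 1\<^sup>2) * (\<Sum>k<d. \<bar>x k\<bar>\<^sup>2)"
    by (rule Cauchy_Schwarz_ineq_sum)
  then have "(\<Sum>k<d. \<bar>x k\<bar>)\<^sup>2 \<le> real d" using assms by simp
  then show ?thesis by (simp add: real_le_rsqrt)
qed

lemma dq_ip_bound:
  fixes w x :: "nat \<Rightarrow> real"
  assumes d: "d \<ge> 1" and wT: "\<And>k. k < d \<Longrightarrow> \<bar>w k\<bar> \<le> T"
    and x: "(\<Sum>k<d. (x k)\<^sup>2) = 1"
  shows "\<bar>dq d w x - ip d w x\<bar> \<le> 4 * T * sqrt (real d)"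
proof -
  have T0: "T \<ge> 0" using wT[of 0] d by auto
  have Vnn: "vvar d w \<ge> 0" unfolding vvar_def by (simp add: sum_nonneg)
  have dpos: "real d > 0" using d by auto
  have "\<bar>\<Sum>k<d. w k\<bar> \<le> (\<Sum>k<d. T)"
    using wT by (intro order.trans[OF sum_abs] sum_mono) auto
  then have E: "\<bar>vmean d w\<bar> \<le> T" using dpos
    by (simp add: vmean_def abs_divide divide_le_eq mult.commute)
  have "(\<Sum>k<d. (w k - vmean d w)\<^sup>2) \<le> (\<Sum>k<d. (2*T)\<^sup>2)"
  proof (intro sum_mono)
    fix k assume "k \<in> {..<d}"
    then have "\<bar>w k - vmean d w\<bar> \<le> 2*T" using wT[of k] E by auto
    then show "(w k - vmean d w)\<^sup>2 \<le> (2*T)\<^sup>2"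
      by (metis abs_ge_zero order.trans power2_abs power_mono)
  qed
  then have "vvar d w \<le> (2*T)\<^sup>2" using dpos by (simp add: vvar_def divide_le_eq mult.commute)
  then have V: "sqrt (vvar d w) \<le> 2*T" using T0 by (simp add: real_sqrt_le_iff real_le_lsqrt)
  have eq: "dq d w x - ip d w x = (\<Sum>k<d. (sqrt (vvar d w) * sgnvec d w k + vmean d w - w k) * x k)"
    unfolding dq_def ip_def
    by (simp add: algebra_simps sum.distrib sum_subtractf sum_distrib_left)
  have "\<bar>\<Sum>k<d. (sqrt (vvar d w) * sgnvec d w k + vmean d w - w k) * x k\<bar>
      \<le> (\<Sum>k<d. (4*T) * \<bar>x k\<bar>)"
  proof (intro order.trans[OF sum_abs] sum_mono)
    fix k assume k: "k \<in> {..<d}"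
    have s: "\<bar>sgnvec d w k\<bar> = 1" by (simp add: sgnvec_def)
    have "\<bar>sqrt (vvar d w) * sgnvec d w k + vmean d w - w k\<bar>
        \<le> \<bar>sqrt (vvar d w) * sgnvec d w k\<bar> + \<bar>vmean d w\<bar> + \<bar>w k\<bar>"
      by arith
    also have "\<dots> \<le> 4 * T" using s V E wT[of k] k Vnn by (auto simp: abs_mult)
    finally show "\<bar>(sqrt (vvar d w) * sgnvec d w k + vmean d w - w k) * x k\<bar> \<le> 4 * T * \<bar>x k\<bar>"
      by (simp add: abs_mult mult_right_mono)
  qed
  also have "\<dots> = 4 * T * (\<Sum>k<d. \<bar>x k\<bar>)" by (simp add: sum_distrib_left)
  also have "\<dots> \<le> 4 * T * sqrt (real d)"
    using sum_abs_le_sqrt[OF x] T0 by (intro mult_left_mono) auto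
  finally show ?thesis using eq by simp
qed

lemma f_diff_eq:
  "f_bin \<kappa> m d x W a - f_full \<kappa> m d x W a
     = \<kappa> / sqrt (real m) * (\<Sum>r<m. a r * (relu (dq d (W r) x) - relu (ip d (W r) x)))"
  unfolding f_bin_def f_full_def
  by (simp add: right_diff_distrib sum_subtractf)




lemma PiM_coord_indep:
  assumes N: "prob_space N" and I: "I \<noteq> {}"
  shows "prob_space.indep_vars (PiM I (\<lambda>_. N)) (\<lambda>_. N) (\<lambda>i \<omega>. \<omega> i) I"
proof -
  interpret P: prob_space "PiM I (\<lambda>_. N)" by (intro prob_space_PiM N)
  show ?thesis
  proof (subst P.indep_vars_iff_distr_eq_PiM'[OF I])
    show "(\<lambda>\<omega>. \<omega> i) \<in> measurable (PiM I (\<lambda>_. N)) N" if "i \<in> I" for i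
      using that by measurable
    have "distr (PiM I (\<lambda>_. N)) (PiM I (\<lambda>_. N)) (\<lambda>x. \<lambda>i\<in>I. x i)
        = distr (PiM I (\<lambda>_. N)) (PiM I (\<lambda>_. N)) (\<lambda>x. x)"
      by (intro distr_cong) (auto simp: space_PiM PiE_def extensional_restrict)
    also have "\<dots> = PiM I (\<lambda>_. N)" by (rule distr_id)
    also have "\<dots> = PiM I (\<lambda>i. distr (PiM I (\<lambda>_. N)) N (\<lambda>\<omega>. \<omega> i))"
      by (intro PiM_cong refl distr_PiM_component[symmetric] N) auto
    finally show "distr (PiM I (\<lambda>_. N)) (PiM I (\<lambda>_. N)) (\<lambda>x. \<lambda>i\<in>I. x i)
        = PiM I (\<lambda>i. distr (PiM I (\<lambda>_. N)) N (\<lambda>\<omega>. \<omega> i))" .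
  qed
qed

abbreviation Rad :: "real measure" where "Rad \<equiv> measure_pmf (pmf_of_set {-1, 1::real})"

lemma rad_hoeffding:
  fixes Y :: "nat \<Rightarrow> real"
  assumes m: "m \<ge> 1" and B: "B > 0" and YB: "\<And>r. r < m \<Longrightarrow> \<bar>Y r\<bar> \<le> B" and s: "s \<ge> 0"
  shows "measure (PiM {..<m} (\<lambda>_. Rad)) {a \<in> space (PiM {..<m} (\<lambda>_. Rad)). s \<le> \<bar>\<Sum>r<m. a r * Y r\<bar>}
     \<le> 2 * exp (- 2 * s\<^sup>2 / (real m * (2*B)\<^sup>2))"
proof -
  let ?M = "PiM {..<m} (\<lambda>_. Rad)"
  have Np: "prob_space Rad" by (rule measure_pmf.prob_space_axioms)
  interpret P: prob_space ?M by (intro prob_space_PiM Np)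
  have I: "{..<m} \<noteq> {}" using m by (auto simp: lessThan_empty_iff)
  note ind0 = PiM_coord_indep[OF Np I]
  have ind: "P.indep_vars (\<lambda>_. borel) (\<lambda>r a. a r * Y r) {..<m}"
    using P.indep_vars_compose2[OF ind0, of "\<lambda>r v. v * Y r" "\<lambda>_. borel"] by simp
  have AE: "AE a in ?M. a r * Y r \<in> {-B..B}" if r: "r < m" for r
  proof -
    have "AE v in Rad. v \<in> {-1, 1}"
      using AE_measure_pmf[of "pmf_of_set {-1, 1::real}"] by simp
    then have "AE a in ?M. a r \<in> {-1, 1}"
      using r by (intro AE_PiM_component[OF Np]) auto
    then show ?thesis
      by (rule eventually_mono) (use YB[OF r] in auto)
  qed
  interpret H: Hoeffding_ineq ?M "{..<m}" "\<lambda>r a. a r * Y r" "\<lambda>_. -B" "\<lambda>_. B" "\<Sum>r<m. P.expectation (\<lambda>a. a r * Y r)"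
    by unfold_locales (use ind AE in auto)
  have E0: "P.expectation (\<lambda>a. a r * Y r) = 0" if r: "r < m" for r
  proof -
    have "P.expectation (\<lambda>a. a r * Y r) = integral\<^sup>L (distr ?M Rad (\<lambda>a. a r)) (\<lambda>v. v * Y r)"
      using r by (subst integral_distr[OF measurable_component_singleton]) auto
    also have "distr ?M Rad (\<lambda>a. a r) = Rad"
      using r by (intro distr_PiM_component Np) auto
    also have "integral\<^sup>L Rad (\<lambda>v. v * Y r) = 0"
      by (subst integral_pmf_of_set) auto
    finally show ?thesis .
  qed
  have mu: "(\<Sum>r<m. P.expectation (\<lambda>a. a r * Y r)) = 0" by (intro sum.neutral ballI E0) simp
  have pos: "(\<Sum>r<m. (B - - B)\<^sup>2) > 0" using m B by auto
  have "P.prob {a \<in> space ?M. \<bar>(\<Sum>r<m. a r * Y r) - (\<Sum>r<m. P.expectation (\<lambda>a. a r * Y r))\<bar> \<ge> s}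
     \<le> 2 * exp (-2 * s\<^sup>2 / (\<Sum>r<m. (B - - B)\<^sup>2))"
    by (rule H.Hoeffding_ineq_abs_ge[OF s pos])
  moreover have "(\<Sum>r<m. (B - - B)\<^sup>2) = real m * (2*B)\<^sup>2" by simp
  ultimately show ?thesis unfolding mu by simp
qed




lemma comp_borel:
  fixes N :: "real measure"
  assumes sN: "sets N = sets borel \<or> sets N = UNIV"
  shows "(\<lambda>w. w i) \<in> borel_measurable (PiM I (\<lambda>_. N))"
proof (cases "i \<in> I")
  case True
  have m: "(\<lambda>w. w i) \<in> measurable (PiM I (\<lambda>_. N)) N" by (rule measurable_component_singleton[OF True])
  show ?thesis
  proof (cases "sets N = UNIV")
    case True
    show ?thesis
      using m True by (auto simp: measurable_def)
  next
    case False
    then have "sets N = sets borel" using sN by auto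
    then show ?thesis using m measurable_cong_sets by blast
  qed
next
  case False
  have sp: "w i = undefined" if "w \<in> space (PiM I (\<lambda>_. N))" for w
    using that False by (auto simp: space_PiM PiE_def extensional_def)
  have "(\<lambda>w. w i) -` A \<inter> space (PiM I (\<lambda>_. N)) \<in> sets (PiM I (\<lambda>_. N))" for A
  proof (cases "undefined \<in> A")
    case True
    have "(\<lambda>w. w i) -` A \<inter> space (PiM I (\<lambda>_. N)) = space (PiM I (\<lambda>_. N))"
    proof (intro equalityI subsetI)
      fix w assume w: "w \<in> space (PiM I (\<lambda>_. N))"
      have "w i = undefined" by (rule sp[OF w])
      with True w show "w \<in> (\<lambda>w. w i) -` A \<inter> space (PiM I (\<lambda>_. N))" by simp
    qed auto
    then show ?thesis by simp
  next
    case nA: False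
    have "(\<lambda>w. w i) -` A \<inter> space (PiM I (\<lambda>_. N)) = {}"
    proof (intro equalityI subsetI)
      fix w assume w: "w \<in> (\<lambda>w. w i) -` A \<inter> space (PiM I (\<lambda>_. N))"
      then have w1: "w \<in> space (PiM I (\<lambda>_. N))" and w2: "w i \<in> A" by auto
      have "w i = undefined" by (rule sp[OF w1])
      with w2 nA show "w \<in> {}" by simp
    qed auto
    then show ?thesis by simp
  qed
  then show ?thesis by (auto simp: measurable_def)
qed

lemma W_meas[measurable]: "(\<lambda>\<omega>. fst \<omega> i) \<in> borel_measurable (init_measure m d)"
  unfolding init_measure_def
  by (rule measurable_compose[OF measurable_fst comp_borel]) auto

lemma a_meas[measurable]: "(\<lambda>\<omega>. snd \<omega> i) \<in> borel_measurable (init_measure m d)"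
  unfolding init_measure_def
  by (rule measurable_compose[OF measurable_snd comp_borel]) auto

lemma F_meas: "(\<lambda>\<omega>. f_bin \<kappa> m d x (Wcols (fst \<omega>)) (snd \<omega>) - f_full \<kappa> m d x (Wcols (fst \<omega>)) (snd \<omega>))
   \<in> borel_measurable (init_measure m d)"
  unfolding f_bin_def f_full_def relu_def dq_def ip_def sgnvec_def vvar_def vmean_def Wcols_def
  by measurable


theorem lemma5p1:
  shows "\<exists>c>0. \<forall>(m::nat) (d::nat) (\<kappa>::real) (\<delta>::real) (x::nat \<Rightarrow> real) (\<epsilon>::real).
     m \<ge> 1 \<longrightarrow> d \<ge> 1 \<longrightarrow> 0 < \<kappa> \<longrightarrow> \<kappa> \<le> 1 \<longrightarrow> 0 < \<delta> \<longrightarrow> \<delta> < 0.1 \<longrightarrow>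
     sqrt (\<Sum>k<d. (x k)\<^sup>2) = 1 \<longrightarrow> 0 < \<epsilon> \<longrightarrow>
     (let D = sqrt (ln (real m * real d / \<delta>)) in
        \<kappa> \<le> c * \<epsilon> / (sqrt (real d) * D\<^sup>2)) \<longrightarrow>
     measure (init_measure m d)
       {\<omega> \<in> space (init_measure m d).
          \<bar>f_bin \<kappa> m d x (Wcols (fst \<omega>)) (snd \<omega>) - f_full \<kappa> m d x (Wcols (fst \<omega>)) (snd \<omega>)\<bar> \<le> \<epsilon>}
       \<ge> 1 - \<delta>"
proof (intro exI[of _ "1/28"] conjI allI impI)
  fix m d :: nat and \<kappa> \<delta> \<epsilon> :: real and x :: "nat \<Rightarrow> real"
  assume m: "m \<ge> 1" and d: "d \<ge> 1" and \<kappa>0: "0 < \<kappa>" and "\<kappa> \<le> 1" and \<delta>0: "0 < \<delta>" and \<delta>1: "\<delta> < 0.1"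
    and xn: "sqrt (\<Sum>k<d. (x k)\<^sup>2) = 1" and \<epsilon>0: "0 < \<epsilon>"
    and hk: "let D = sqrt (ln (real m * real d / \<delta>)) in \<kappa> \<le> 1/28 * \<epsilon> / (sqrt (real d) * D\<^sup>2)"
  define L where "L = ln (real m * real d / \<delta>)"
  define l4 where "l4 = ln (4 / \<delta>)"
  define k where "k = nat \<lceil>ln (2 * real m * real d / \<delta>)\<rceil>"
  define T where "T = sqrt (2 * exp 1 * real k)"
  define B where "B = 4 * T * sqrt (real d)"
  define s where "s = B * sqrt (2 * real m * l4)"
  have x1: "(\<Sum>k<d. (x k)\<^sup>2) = 1" using xn by simp
  have md1: "real m * real d \<ge> 1" using mult_mono[of 1 "real m" 1 "real d"] m d by simp
  have md10: "real m * real d / \<delta> \<ge> 10"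
  proof -
    have "10 * \<delta> \<le> 1" using \<delta>1 by simp
    also have "\<dots> \<le> real m * real d" by (rule md1)
    finally show ?thesis using \<delta>0 by (simp add: le_divide_eq)
  qed
  have e3: "exp 1 \<le> (3::real)" by (rule exp_le)
  have L1: "1 + ln 2 \<le> L"
  proof -
    have "ln (2 * exp (1::real)) \<le> ln (real m * real d / \<delta>)"
      using md10 e3 by (subst ln_le_cancel_iff) auto
    moreover have "ln (2 * exp 1) = ln 2 + (1::real)" by (simp add: ln_mult)
    ultimately show ?thesis unfolding L_def by simp
  qed
  have L4: "ln 4 \<le> L"
    unfolding L_def using md10 by (subst ln_le_cancel_iff) auto
  have ln2: "ln (2::real) > 0" by simp
  have Lpos: "L > 0" using L1 ln2 by linarith
  have l4L: "l4 \<le> 2 * L"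
  proof -
    have "l4 = ln 4 - ln \<delta>" unfolding l4_def using \<delta>0 by (simp add: ln_div)
    moreover have "L = ln (real m * real d) - ln \<delta>" unfolding L_def using \<delta>0 md1 m d by (simp add: ln_div)
    moreover have "ln (real m * real d) \<ge> 0" using md1 by simp
    ultimately show ?thesis using L4 by linarith
  qed
  have l4pos: "l4 > 0" unfolding l4_def using \<delta>1 \<delta>0 by simp
  have ln2md: "ln (2 * real m * real d / \<delta>) = ln 2 + L"
  proof -
    have eq: "2 * real m * real d / \<delta> = 2 * (real m * real d / \<delta>)" by simp
    have pos: "real m * real d / \<delta> > 0" using md1 \<delta>0 by simp
    show ?thesis unfolding L_def eq by (rule ln_mult_pos) (use pos in auto)
  qed
  have kceil: "real k = of_int \<lceil>ln 2 + L\<rceil>"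
  proof -
    have "ln 2 + L \<ge> 0" using Lpos ln2 by simp
    then show ?thesis unfolding k_def ln2md by simp
  qed
  have kge: "real k \<ge> ln 2 + L" unfolding kceil by (rule le_of_int_ceiling)
  have kle: "real k \<le> 2 * L"
  proof -
    have "real k < ln 2 + L + 1" unfolding kceil by linarith
    then show ?thesis using L1 by linarith
  qed
  have kpos: "real k > 0" using kge Lpos ln2 by linarith
  have T2: "T\<^sup>2 = 2 * exp 1 * real k" unfolding T_def using kpos by simp
  have Tpos: "T > 0" unfolding T_def using kpos by simp
  have Bpos: "B > 0" unfolding B_def using Tpos d by simp
  have s0: "s \<ge> 0" unfolding s_def using Bpos l4pos by simp

  have D2: "(sqrt (ln (real m * real d / \<delta>)))\<^sup>2 = L" unfolding L_def using Lpos[unfolded L_def] by simp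
  have dpos: "sqrt (real d) > 0" using d by simp
  have hk': "\<kappa> \<le> 1/28 * \<epsilon> / (sqrt (real d) * L)" using hk unfolding Let_def D2 .
  then have hk2: "28 * \<kappa> * sqrt (real d) * L \<le> \<epsilon>" using dpos Lpos by (simp add: le_divide_eq mult_ac)
  have num: "\<kappa> / sqrt (real m) * s \<le> \<epsilon>"
  proof -
    have mpos: "sqrt (real m) > 0" using m by simp
    have "\<kappa> / sqrt (real m) * s = \<kappa> * B * sqrt (2 * l4)"
      unfolding s_def using mpos by (simp add: real_sqrt_mult field_simps)
    also have "\<dots> = \<kappa> * sqrt (real d) * (4 * sqrt (4 * exp 1 * real k * l4))"
      unfolding B_def T_def by (simp add: real_sqrt_mult[symmetric] mult_ac)
    also have "\<dots> \<le> \<kappa> * sqrt (real d) * (28 * L)"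
    proof -
      have "4 * exp 1 * real k * l4 \<le> 4 * 3 * (2 * L) * (2 * L)"
        using e3 kle l4L kpos l4pos by (intro mult_mono) auto
      also have "\<dots> \<le> (7 * L)\<^sup>2" by (simp add: power2_eq_square)
      finally have "sqrt (4 * exp 1 * real k * l4) \<le> 7 * L"
        using Lpos by (simp add: real_sqrt_le_iff real_le_lsqrt)
      then show ?thesis using \<kappa>0 dpos by (intro mult_left_mono) auto
    qed
    also have "\<dots> = 28 * \<kappa> * sqrt (real d) * L" by simp
    finally show ?thesis using hk2 by simp
  qed
  define I where "I = {..<m} \<times> {..<d}"
  define M1 where "M1 = PiM I (\<lambda>_. std_normal_distribution)"
  define M2 where "M2 = PiM {..<m} (\<lambda>_. Rad)"
  have Mdef: "init_measure m d = M1 \<Otimes>\<^sub>M M2" unfolding init_measure_def M1_def M2_def I_def ..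
  have Np: "prob_space std_normal_distribution" by (simp add: prob_space_normal_density)
  interpret P1: prob_space M1 unfolding M1_def by (intro prob_space_PiM Np)
  interpret P2: prob_space M2 unfolding M2_def by (intro prob_space_PiM measure_pmf.prob_space_axioms)
  interpret P12: pair_prob_space M1 M2 by unfold_locales
  let ?F = "\<lambda>\<omega>. f_bin \<kappa> m d x (Wcols (fst \<omega>)) (snd \<omega>) - f_full \<kappa> m d x (Wcols (fst \<omega>)) (snd \<omega>)"
  define A where "A = {\<omega> \<in> space (init_measure m d). \<bar>?F \<omega>\<bar> \<le> \<epsilon>}"
  have A_sets: "A \<in> sets (M1 \<Otimes>\<^sub>M M2)"
  proof -
    have [measurable]: "?F \<in> borel_measurable (init_measure m d)" by (rule F_meas)
    have "A \<in> sets (init_measure m d)" unfolding A_def by measurable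
    then show ?thesis unfolding Mdef .
  qed
  define G where "G = {w \<in> space M1. \<forall>i\<in>I. \<bar>w i\<bar> < T}"
  have badeq: "space M1 - G = {w \<in> space M1. \<exists>i\<in>I. T \<le> \<bar>w i\<bar>}" unfolding G_def using not_less by blast
  have bad: "measure M1 (space M1 - G) \<le> \<delta> / 2"
  proof -
    have "measure M1 (space M1 - G) \<le> real (card I) * (2 * real k / T\<^sup>2) ^ k"
      unfolding badeq unfolding M1_def by (rule gauss_union) (auto simp: Tpos I_def)
    also have "(2 * real k / T\<^sup>2) ^ k = exp (- real k)"
    proof -
      have "2 * real k / T\<^sup>2 = exp (-1)" unfolding T2 using kpos by (simp add: exp_minus field_simps)
      then show ?thesis by (simp add: exp_of_nat_mult[symmetric])
    qed
    also have "real (card I) = real m * real d" unfolding I_def by simp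
    also have "exp (- real k) \<le> \<delta> / (2 * real m * real d)"
    proof -
      have "exp (- real k) \<le> exp (- ln (2 * real m * real d / \<delta>))"
        using kge ln2md by simp
      also have "\<dots> = \<delta> / (2 * real m * real d)"
      proof -
        have "2 * real m * real d / \<delta> > 0" using m d \<delta>0 by simp
        then have "exp (ln (2 * real m * real d / \<delta>)) = 2 * real m * real d / \<delta>" by simp
        then show ?thesis by (simp add: exp_minus)
      qed
      finally show ?thesis .
    qed
    then have "real m * real d * exp (- real k) \<le> real m * real d * (\<delta> / (2 * real m * real d))"
      using md1 by (intro mult_left_mono) auto
    also have "\<dots> = \<delta> / 2" using m d by (simp add: field_simps)
    finally show ?thesis by simp
  qed
  have G_sets: "G \<in> sets M1"
  proof -
    have [measurable]: "(\<lambda>w. w i) \<in> borel_measurable M1" for i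
      unfolding M1_def by (rule comp_borel) simp
    have [simp]: "finite I" unfolding I_def by simp
    show ?thesis unfolding G_def by measurable
  qed
  have PG: "measure M1 G \<ge> 1 - \<delta> / 2"
    using P1.prob_compl[OF G_sets] bad by linarith
  have [measurable]: "(\<lambda>a. a r) \<in> borel_measurable M2" for r
    unfolding M2_def by (rule comp_borel) simp
  have sec: "emeasure M2 (Pair w -` A) \<ge> ennreal (1 - \<delta> / 2)" if wG: "w \<in> G" for w
  proof -
    have w1: "w \<in> space M1" using wG unfolding G_def by auto
    define Y where "Y = (\<lambda>r. relu (dq d (Wcols w r) x) - relu (ip d (Wcols w r) x))"
    have YB: "\<bar>Y r\<bar> \<le> B" if r: "r < m" for r
    proof -
      have wT: "\<bar>Wcols w r k\<bar> \<le> T" if "k < d" for k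
        using wG r that unfolding G_def I_def Wcols_def by (auto intro: less_imp_le)
      have "\<bar>Y r\<bar> \<le> \<bar>dq d (Wcols w r) x - ip d (Wcols w r) x\<bar>" unfolding Y_def by (rule relu_lip)
      also have "\<dots> \<le> 4 * T * sqrt (real d)" by (rule dq_ip_bound[OF d wT x1])
      finally show ?thesis unfolding B_def .
    qed
    define Bad where "Bad = {a \<in> space M2. s \<le> \<bar>\<Sum>r<m. a r * Y r\<bar>}"
    have Bad_sets: "Bad \<in> sets M2" unfolding Bad_def by measurable
    have "measure M2 Bad \<le> 2 * exp (- 2 * s\<^sup>2 / (real m * (2*B)\<^sup>2))"
      unfolding Bad_def M2_def by (rule rad_hoeffding[OF m Bpos YB s0])
    also have "- 2 * s\<^sup>2 / (real m * (2*B)\<^sup>2) = - l4"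
      unfolding s_def using Bpos m l4pos by (simp add: power_mult_distrib field_simps)
    also have "2 * exp (- l4) = \<delta> / 2"
      unfolding l4_def using \<delta>0 by (simp add: exp_minus)
    finally have PBad: "measure M2 Bad \<le> \<delta> / 2" .
    have sub: "space M2 - Bad \<subseteq> Pair w -` A"
    proof
      fix a assume a: "a \<in> space M2 - Bad"
      then have a1: "a \<in> space M2" and lt: "\<bar>\<Sum>r<m. a r * Y r\<bar> < s" unfolding Bad_def by auto
      have sp: "(w, a) \<in> space (init_measure m d)" unfolding Mdef space_pair_measure using w1 a1 by simp
      have "?F (w, a) = \<kappa> / sqrt (real m) * (\<Sum>r<m. a r * Y r)"
        unfolding Y_def by (simp add: f_diff_eq)
      then have "\<bar>?F (w, a)\<bar> = \<kappa> / sqrt (real m) * \<bar>\<Sum>r<m. a r * Y r\<bar>"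
        using \<kappa>0 by (simp add: abs_mult)
      also have "\<dots> \<le> \<kappa> / sqrt (real m) * s"
        using lt \<kappa>0 by (intro mult_left_mono) auto
      also have "\<dots> \<le> \<epsilon>" by (rule num)
      finally show "a \<in> Pair w -` A" unfolding A_def using sp by simp
    qed
    have "ennreal (1 - \<delta> / 2) \<le> ennreal (measure M2 (space M2 - Bad))"
      using P2.prob_compl[OF Bad_sets] PBad by (intro ennreal_leI) linarith
    also have "\<dots> = emeasure M2 (space M2 - Bad)"
      by (simp add: P2.emeasure_eq_measure)
    also have "\<dots> \<le> emeasure M2 (Pair w -` A)"
      by (rule emeasure_mono[OF sub sets_Pair1[OF A_sets]])
    finally show ?thesis .
  qed
  have "ennreal ((1 - \<delta> / 2) * (1 - \<delta> / 2)) = ennreal (1 - \<delta> / 2) * ennreal (1 - \<delta> / 2)"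
    using \<delta>1 by (simp add: ennreal_mult)
  also have "\<dots> \<le> ennreal (1 - \<delta> / 2) * emeasure M1 G"
  proof (intro mult_left_mono)
    show "ennreal (1 - \<delta> / 2) \<le> emeasure M1 G"
      using PG by (simp add: P1.emeasure_eq_measure ennreal_leI)
  qed simp
  also have "\<dots> = (\<integral>\<^sup>+ w. ennreal (1 - \<delta> / 2) * indicator G w \<partial>M1)"
    by (rule nn_integral_cmult_indicator[OF G_sets, symmetric])
  also have "\<dots> \<le> (\<integral>\<^sup>+ w. emeasure M2 (Pair w -` A) \<partial>M1)"
  proof (intro nn_integral_mono)
    fix w assume "w \<in> space M1"
    show "ennreal (1 - \<delta> / 2) * indicator G w \<le> emeasure M2 (Pair w -` A)"
      using sec[of w] by (cases "w \<in> G") auto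
  qed
  also have "\<dots> = emeasure (M1 \<Otimes>\<^sub>M M2) A"
    by (rule P2.emeasure_pair_measure_alt[OF A_sets, symmetric])
  also have "\<dots> = ennreal (measure (M1 \<Otimes>\<^sub>M M2) A)"
    by (rule P12.P.emeasure_eq_measure)
  finally have "(1 - \<delta> / 2) * (1 - \<delta> / 2) \<le> measure (M1 \<Otimes>\<^sub>M M2) A"
    by (subst (asm) ennreal_le_iff) auto
  moreover have "1 - \<delta> \<le> (1 - \<delta> / 2) * (1 - \<delta> / 2)" by (simp add: algebra_simps)
  ultimately show "measure (init_measure m d) {\<omega> \<in> space (init_measure m d). \<bar>?F \<omega>\<bar> \<le> \<epsilon>} \<ge> 1 - \<delta>"
    unfolding A_def Mdef by linarith
qed simp

end
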